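(* For every $n\ge1$, $R_n=\inf_{\mathbb{P}\in\mathcal{C}_n}R_n(\mathbb{P})$.
   Context: Scheduling on two machines with $n$ tasks. A processing-time matrix is $T\in\mathbb{R}_{++}^{2\times n}$; an allocation is $X\in\{0,1\}^{2\times n}$ with $X_{1j}+X_{2j}=1$; makespan $M(X,T)=\max_{i\in\{1,2\}}\sum_jX_{ij}T_{ij}$; $M^*(T)=\min_XM(X,T)$. $\mathcal{P}_n$ is the set of Borel probability measures on $\mathbb{R}^n$ supported in $\mathbb{R}_{++}^n$. For $\mathbb{P}\in\mathcal{P}_n$, algorithm $\mathcal{A}^{\mathbb{P}}$ draws $\mathbf{z}\sim\mathbb{P}$ and sends task $j$ to machine 1 iff $T_{1j}/T_{2j}<z_j$ (else to machine 2); $M(\mathbb{P},T)$ is its expected makespan, $R_n(\mathbb{P})=\sup_TM(\mathbb{P},T)/M^*(T)\in[1,\infty]$, and $R_n=\inf_{\mathbb{P}\in\mathcal{P}_n}R_n(\mathbb{P})$. $\mathcal{C}_n$ is the set of $\mathbb{P}\in\mathcal{P}_n$ invariant under permutations of coordinates: for every permutation $\pi$ of $[n]$, if $\mathbf{z}\sim\mathbb{P}$ then $(z_{\pi(1)},\dots,z_{\pi(n)})\sim\mathbb{P}$. *)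

theory Defs
  imports "HOL-Probability.Probability"
begin

text \<open>Two machines indexed by the type 2 (elements 1 and 2), tasks indexed by
  a finite type 'n with CARD('n) = n.\<close>

definition pos_matrix :: "real^'n^2 \<Rightarrow> bool" where
  "pos_matrix T \<longleftrightarrow> (\<forall>i j. 0 < T$i$j)"

definition allocation :: "real^'n^2 \<Rightarrow> bool" where
  "allocation X \<longleftrightarrow> (\<forall>i j. X$i$j \<in> {0,1}) \<and> (\<forall>j. X$1$j + X$2$j = 1)"

definition makespan :: "real^'n^2 \<Rightarrow> real^'n^2 \<Rightarrow> real" where
  "makespan X T = max (\<Sum>j\<in>UNIV. X$1$j * T$1$j) (\<Sum>j\<in>UNIV. X$2$j * T$2$j)"

definition opt_makespan :: "real^'n^2 \<Rightarrow> real" where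
  "opt_makespan T = Min {makespan X T | X. allocation X}"

definition Pn :: "(real^'n) measure set" where
  "Pn = {P. sets P = sets borel \<and> prob_space P \<and> (AE z in P. \<forall>j. 0 < z$j)}"

definition alg_alloc :: "real^'n^2 \<Rightarrow> real^'n \<Rightarrow> real^'n^2" where
  "alg_alloc T z = (\<chi> i j. if (i = 1) = (T$1$j / T$2$j < z$j) then 1 else 0)"

definition exp_makespan :: "(real^'n) measure \<Rightarrow> real^'n^2 \<Rightarrow> ennreal" where
  "exp_makespan P T = (\<integral>\<^sup>+ z. ennreal (makespan (alg_alloc T z) T) \<partial>P)"

definition ratio_P :: "(real^'n) measure \<Rightarrow> ennreal" where
  "ratio_P P = (SUP T\<in>{T. pos_matrix T}. exp_makespan P T / ennreal (opt_makespan T))"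

definition ratio_n :: "('n::finite) itself \<Rightarrow> ennreal" where
  "ratio_n (_ :: 'n itself) = (INF P\<in>(Pn :: (real^'n) measure set). ratio_P P)"

definition Cn :: "(real^'n) measure set" where
  "Cn = {P\<in>Pn. \<forall>\<pi>. \<pi> permutes (UNIV :: 'n set) \<longrightarrow>
          distr P borel (\<lambda>z. \<chi> j. z$(\<pi> j)) = P}"

end

theory Submission imports Defs begin

definition pz :: "('n \<Rightarrow> 'n) \<Rightarrow> real^'n \<Rightarrow> real^'n" where
  "pz p z = (\<chi> j. z$(p j))"
definition permT :: "('n \<Rightarrow> 'n) \<Rightarrow> real^'n^2 \<Rightarrow> real^'n^2" where
  "permT p T = (\<chi> i j. T$i$(p j))"

lemma permT_permT: "permT p (permT q T) = permT (q \<circ> p) T"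
  by (simp add: permT_def vec_eq_iff)

lemma makespan_perm:
  assumes "bij p" shows "makespan (permT p X) (permT p T) = makespan X T"
proof -
  have "(\<Sum>j\<in>UNIV. X$i$(p j) * T$i$(p j)) = (\<Sum>j\<in>UNIV. X$i$j * T$i$j)" for i
    using assms by (intro sum.reindex_bij_betw) (simp add: bij_betw_def bij_def)
  then show ?thesis by (simp add: makespan_def permT_def)
qed

lemma allocation_perm: "allocation X \<Longrightarrow> allocation (permT p X)"
  by (simp add: allocation_def permT_def)

lemma pos_perm: "pos_matrix T \<Longrightarrow> pos_matrix (permT p T)"
  by (simp add: pos_matrix_def permT_def)

lemma opt_perm:
  assumes "bij p" shows "opt_makespan (permT p T) = opt_makespan T"
proof -
  have "{makespan X (permT p T) | X. allocation X} = {makespan X T | X. allocation X}"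
  proof (intro equalityI subsetI)
    fix m assume "m \<in> {makespan X (permT p T) | X. allocation X}"
    then obtain X where X: "allocation X" "m = makespan X (permT p T)" by blast
    have "X = permT p (permT (inv p) X)" using assms
      by (simp add: permT_permT bij_is_inj permT_def vec_eq_iff)
    hence "m = makespan (permT (inv p) X) T" using X(2) makespan_perm[OF assms, of "permT (inv p) X" T] by simp
    thus "m \<in> {makespan X T | X. allocation X}" using X allocation_perm by blast
  next
    fix m assume "m \<in> {makespan X T | X. allocation X}"
    then obtain X where X: "allocation X" "m = makespan X T" by blast
    thus "m \<in> {makespan X (permT p T) | X. allocation X}"
      using allocation_perm[of X p] makespan_perm[OF assms, of X T] by (auto intro!: exI[of _ "permT p X"])
  qed
  thus ?thesis by (simp add: opt_makespan_def)
qed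

lemma alg_perm:
  assumes "bij p"
  shows "makespan (alg_alloc T (pz p z)) T = makespan (alg_alloc (permT (inv p) T) z) (permT (inv p) T)"
proof -
  have e1: "T = permT p (permT (inv p) T)" using assms
    by (simp add: permT_permT bij_is_inj permT_def vec_eq_iff)
  have e2: "alg_alloc T (pz p z) = permT p (alg_alloc (permT (inv p) T) z)"
    using assms by (simp add: alg_alloc_def pz_def permT_def vec_eq_iff bij_is_inj)
  show ?thesis by (subst (2) e1, subst e2, rule makespan_perm[OF assms])
qed

lemma pz_meas: "pz p \<in> borel_measurable borel"
  unfolding pz_def by (intro borel_measurable_continuous_onI continuous_intros)

lemma vnth_meas: "(\<lambda>z::real^'n. z$j) \<in> borel_measurable borel"
  by (intro borel_measurable_continuous_onI continuous_intros)

lemma f_meas: "(\<lambda>z. ennreal (makespan (alg_alloc T z) T)) \<in> borel_measurable (borel :: (real^'n) measure)"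
  unfolding makespan_def alg_alloc_def
  apply (simp add: vec_lambda_beta)
  using vnth_meas apply measurable
  done

lemma pos_pred: "Measurable.pred borel (\<lambda>y::real^'n. \<forall>j. 0 < y$j)"
  using vnth_meas by measurable

definition perms :: "('n \<Rightarrow> 'n) set" where "perms = {p. p permutes (UNIV::'n set)}"

lemma perms_ne: "perms \<noteq> {}"
proof -
  have "id \<in> perms" by (simp add: perms_def permutes_id)
  thus ?thesis by blast
qed
lemma perms_fin: "finite (perms :: ('n::finite \<Rightarrow> 'n) set)"
  unfolding perms_def by (rule finite_permutations) simp

definition symm :: "(real^'n::finite) measure \<Rightarrow> (real^'n) measure" where
  "symm P = measure_pmf (pmf_of_set perms) \<bind> (\<lambda>p. distr P borel (pz p))"

lemma kernel:
  assumes "P \<in> Pn"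
  shows "(\<lambda>p. distr P borel (pz p)) \<in> measure_pmf (pmf_of_set (perms::('n::finite \<Rightarrow> 'n) set)) \<rightarrow>\<^sub>M prob_algebra borel"
proof -
  have sP: "sets P = sets borel" and pP: "prob_space P" using assms by (auto simp: Pn_def)
  have m: "pz p \<in> P \<rightarrow>\<^sub>M borel" for p :: "'n \<Rightarrow> 'n"
    by (simp add: measurable_cong_sets[OF sP refl] pz_meas)
  show ?thesis using prob_space.prob_space_distr[OF pP m]
    by (auto simp: space_prob_algebra)
qed

lemma symm_Pn:
  fixes P :: "(real^'n::finite) measure"
  assumes "P \<in> Pn" shows "symm P \<in> Pn"
proof -
  have sP: "sets P = sets borel" and pP: "prob_space P" and ae: "AE z in P. \<forall>j. 0 < z$j"
    using assms by (auto simp: Pn_def)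
  have m: "pz p \<in> P \<rightarrow>\<^sub>M borel" for p :: "'n \<Rightarrow> 'n"
    by (simp add: measurable_cong_sets[OF sP refl] pz_meas)
  have A: "measure_pmf (pmf_of_set (perms::('n \<Rightarrow> 'n) set)) \<in> space (prob_algebra (count_space UNIV))"
    by (simp add: space_prob_algebra prob_space_measure_pmf)
  have s: "sets (symm P) = sets borel" unfolding symm_def
    using sets_bind'[OF _ kernel[OF assms]] A by (simp add: space_prob_algebra)
  have p: "prob_space (symm P)" unfolding symm_def
    using prob_space_bind'[OF _ kernel[OF assms]] A by (simp add: space_prob_algebra)
  have "AE z in symm P. \<forall>j. 0 < z$j"
  proof -
    have AEp: "AE y in distr P borel (pz p). \<forall>j. 0 < y $ j" for p :: "'n \<Rightarrow> 'n"
    proof -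
      have pr: "{x \<in> space borel. \<forall>j. 0 < x $ j} \<in> sets (borel :: (real^'n) measure)"
        using pos_pred unfolding pred_def by simp
      have "AE x in P. \<forall>j. 0 < pz p x $ j"
        using ae by eventually_elim (simp add: pz_def)
      thus ?thesis by (simp add: AE_distr_iff[OF m pr])
    qed
    show ?thesis unfolding symm_def using AEp
      by (subst AE_bind[OF measurable_prob_algebraD[OF kernel[OF assms]] pos_pred]) simp
  qed
  thus ?thesis using s p by (simp add: Pn_def)
qed

lemma emeasure_symm:
  fixes P :: "(real^'n::finite) measure"
  assumes P: "P \<in> Pn" and A: "A \<in> sets borel"
  shows "emeasure (symm P) A = (\<Sum>p\<in>perms. emeasure P (pz p -` A \<inter> space P)) / of_nat (card (perms :: ('n \<Rightarrow> 'n) set))"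
proof -
  have sP: "sets P = sets borel" using P by (auto simp: Pn_def)
  have m: "pz p \<in> P \<rightarrow>\<^sub>M borel" for p :: "'n \<Rightarrow> 'n"
    by (simp add: measurable_cong_sets[OF sP refl] pz_meas)
  have "emeasure (symm P) A = (\<integral>\<^sup>+p. emeasure (distr P borel (pz p)) A \<partial>measure_pmf (pmf_of_set perms))"
    unfolding symm_def
    by (rule emeasure_bind[OF _ measurable_prob_algebraD[OF kernel[OF P]] A]) simp
  also have "\<dots> = (\<Sum>p\<in>perms. emeasure (distr P borel (pz p)) A) / of_nat (card (perms :: ('n \<Rightarrow> 'n) set))"
    by (rule nn_integral_pmf_of_set[OF perms_ne perms_fin])
  also have "\<dots> = (\<Sum>p\<in>perms. emeasure P (pz p -` A \<inter> space P)) / of_nat (card (perms :: ('n \<Rightarrow> 'n) set))"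
    by (simp add: emeasure_distr[OF m A])
  finally show ?thesis .
qed

lemma pz_comp: "pz s (pz p z) = pz (p \<circ> s) z"
  by (simp add: pz_def vec_eq_iff)

lemma bij_perms:
  assumes "s permutes (UNIV::'n set)"
  shows "bij_betw (\<lambda>p. p \<circ> s) (perms :: ('n::finite \<Rightarrow> 'n) set) perms"
proof (rule bij_betw_byWitness[where f'="\<lambda>p. p \<circ> inv s"])
  show "\<forall>a\<in>perms. a \<circ> s \<circ> inv s = a"
    using assms by (simp add: o_assoc[symmetric] permutes_inv_o)
  show "\<forall>a\<in>perms. a \<circ> inv s \<circ> s = a"
    using assms by (simp add: o_assoc[symmetric] permutes_inv_o)
  show "(\<lambda>p. p \<circ> s) ` perms \<subseteq> perms"
    using assms by (auto simp: perms_def intro: permutes_compose)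
  show "(\<lambda>p. p \<circ> inv s) ` perms \<subseteq> perms"
    using assms by (auto simp: perms_def intro: permutes_compose permutes_inv)
qed

lemma symm_Cn:
  fixes P :: "(real^'n::finite) measure"
  assumes P: "P \<in> Pn" shows "symm P \<in> Cn"
proof -
  have sP: "sets P = sets borel" using P by (auto simp: Pn_def)
  have sQ: "sets (symm P) = sets borel" using symm_Pn[OF P] by (auto simp: Pn_def)
  have spQ: "space (symm P) = UNIV" using sets_eq_imp_space_eq[OF sQ] by simp
  have spP: "space P = UNIV" using sets_eq_imp_space_eq[OF sP] by simp
  have "distr (symm P) borel (pz s) = symm P" if s: "s permutes (UNIV::'n set)" for s
  proof (rule measure_eqI)
    show "sets (distr (symm P) borel (pz s)) = sets (symm P)" using sQ by simp
    fix A assume "A \<in> sets (distr (symm P) borel (pz s))"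
    hence A: "A \<in> sets borel" by simp
    have mQ: "pz s \<in> symm P \<rightarrow>\<^sub>M borel"
      by (simp add: measurable_cong_sets[OF sQ refl] pz_meas)
    have A': "pz s -` A \<in> sets borel"
      using measurable_sets[OF pz_meas A] by simp
    have "emeasure (distr (symm P) borel (pz s)) A = emeasure (symm P) (pz s -` A)"
      by (simp add: emeasure_distr[OF mQ A] spQ)
    also have "\<dots> = (\<Sum>p\<in>perms. emeasure P (pz p -` (pz s -` A) \<inter> space P)) / of_nat (card (perms :: ('n \<Rightarrow> 'n) set))"
      by (rule emeasure_symm[OF P A'])
    also have "(\<Sum>p\<in>perms. emeasure P (pz p -` (pz s -` A) \<inter> space P)) = (\<Sum>p\<in>perms. emeasure P (pz (p \<circ> s) -` A))"
      by (intro sum.cong refl arg_cong[where f="emeasure P"]) (auto simp: spP pz_comp)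
    also have "(\<Sum>p\<in>perms. emeasure P (pz (p \<circ> s) -` A)) = (\<Sum>p\<in>perms. emeasure P (pz p -` A))"
      by (rule sum.reindex_bij_betw[OF bij_perms[OF s], of "\<lambda>p. emeasure P (pz p -` A)"])
    also have "(\<Sum>p\<in>perms. emeasure P (pz p -` A)) / of_nat (card (perms :: ('n \<Rightarrow> 'n) set)) = emeasure (symm P) A"
      by (simp add: emeasure_symm[OF P A] spP)
    finally show "emeasure (distr (symm P) borel (pz s)) A = emeasure (symm P) A" .
  qed
  moreover have "(\<lambda>z. \<chi> j. z$(s j)) = pz s" for s :: "'n \<Rightarrow> 'n"
    by (rule ext) (simp add: pz_def)
  ultimately show ?thesis using symm_Pn[OF P] by (simp add: Cn_def)
qed

lemma ennreal_avg_le: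
  fixes e :: "'a \<Rightarrow> ennreal"
  assumes fin: "finite A" and ne: "A \<noteq> {}" and le: "\<And>a. a \<in> A \<Longrightarrow> e a / c \<le> r"
  shows "((\<Sum>a\<in>A. e a) / of_nat (card A)) / c \<le> r"
proof -
  have N0: "(of_nat (card A) :: ennreal) \<noteq> 0" using fin ne by simp
  have Nt: "(of_nat (card A) :: ennreal) \<noteq> top" by simp
  have "((\<Sum>a\<in>A. e a) / of_nat (card A)) / c = (\<Sum>a\<in>A. e a / c) / of_nat (card A)"
    by (simp add: divide_ennreal_def sum_distrib_right sum_distrib_left mult_ac)
  also have "\<dots> \<le> (\<Sum>a\<in>A. r) / of_nat (card A)"
    by (intro divide_right_mono_ennreal sum_mono le)
  also have "\<dots> = (r * of_nat (card A)) / of_nat (card A)" by (simp add: mult.commute)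
  also have "\<dots> = r" by (rule mult_divide_eq_ennreal[OF N0 Nt])
  finally show ?thesis .
qed

lemma ratio_symm:
  fixes P :: "(real^'n::finite) measure"
  assumes P: "P \<in> Pn" shows "ratio_P (symm P) \<le> ratio_P P"
  unfolding ratio_P_def
proof (rule SUP_least)
  fix T :: "real^'n^2" assume T: "T \<in> {T. pos_matrix T}"
  have sP: "sets P = sets borel" using P by (auto simp: Pn_def)
  have m: "pz p \<in> P \<rightarrow>\<^sub>M borel" for p :: "'n \<Rightarrow> 'n"
    by (simp add: measurable_cong_sets[OF sP refl] pz_meas)
  define f where "f = (\<lambda>z. ennreal (makespan (alg_alloc T z) T))"
  have fm: "f \<in> borel_measurable borel" unfolding f_def by (rule f_meas)
  have fm': "f \<in> borel_measurable (distr P borel (pz p))" for p :: "'n \<Rightarrow> 'n"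
    using fm by (simp add: measurable_cong_sets[of "distr P borel (pz p)" borel borel borel])
  have int_p: "(\<integral>\<^sup>+z. f z \<partial>distr P borel (pz p)) = exp_makespan P (permT (inv p) T)"
    if p: "p \<in> perms" for p
  proof -
    have b: "bij p" using p by (simp add: perms_def permutes_bij)
    show ?thesis
      unfolding nn_integral_distr[OF m fm'] by (simp add: exp_makespan_def f_def alg_perm[OF b])
  qed
  have "exp_makespan (symm P) T = (\<integral>\<^sup>+p. (\<integral>\<^sup>+z. f z \<partial>distr P borel (pz p)) \<partial>measure_pmf (pmf_of_set perms))"
    unfolding exp_makespan_def symm_def f_def[symmetric]
    by (rule nn_integral_bind[OF fm measurable_prob_algebraD[OF kernel[OF P]]])
  also have "\<dots> = (\<Sum>p\<in>perms. (\<integral>\<^sup>+z. f z \<partial>distr P borel (pz p))) / of_nat (card (perms :: ('n \<Rightarrow> 'n) set))"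
    by (rule nn_integral_pmf_of_set[OF perms_ne perms_fin])
  also have "\<dots> = (\<Sum>p\<in>perms. exp_makespan P (permT (inv p) T)) / of_nat (card (perms :: ('n \<Rightarrow> 'n) set))"
    by (simp add: int_p)
  finally have e: "exp_makespan (symm P) T = \<dots>" .
  show "exp_makespan (symm P) T / ennreal (opt_makespan T) \<le> (SUP T\<in>{T. pos_matrix T}. exp_makespan P T / ennreal (opt_makespan T))"
    unfolding e
  proof (rule ennreal_avg_le[OF perms_fin perms_ne])
    fix p assume p: "p \<in> (perms :: ('n \<Rightarrow> 'n) set)"
    have b: "bij (inv p)" using p by (simp add: perms_def permutes_bij bij_imp_bij_inv)
    have "exp_makespan P (permT (inv p) T) / ennreal (opt_makespan T)
        = exp_makespan P (permT (inv p) T) / ennreal (opt_makespan (permT (inv p) T))"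
      by (simp add: opt_perm[OF b])
    also have "\<dots> \<le> (SUP T\<in>{T. pos_matrix T}. exp_makespan P T / ennreal (opt_makespan T))"
      using T pos_perm by (intro SUP_upper) auto
    finally show "exp_makespan P (permT (inv p) T) / ennreal (opt_makespan T) \<le> (SUP T\<in>{T. pos_matrix T}. exp_makespan P T / ennreal (opt_makespan T))" .
  qed
qed

theorem corollary2:
  shows "ratio_n TYPE('n::finite) = (INF P\<in>(Cn :: (real^'n) measure set). ratio_P P)"
proof (rule antisym)
  have sub: "(Cn :: (real^'n) measure set) \<subseteq> Pn" by (auto simp: Cn_def)
  show "ratio_n TYPE('n) \<le> (INF P\<in>(Cn :: (real^'n) measure set). ratio_P P)"
    unfolding ratio_n_def using sub by (rule INF_superset_mono) simp
  show "(INF P\<in>(Cn :: (real^'n) measure set). ratio_P P) \<le> ratio_n TYPE('n)"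
    unfolding ratio_n_def
  proof (rule INF_greatest)
    fix P :: "(real^'n) measure" assume P: "P \<in> Pn"
    show "(INF P\<in>(Cn :: (real^'n) measure set). ratio_P P) \<le> ratio_P P"
      using symm_Cn[OF P] ratio_symm[OF P] by (rule INF_lower2)
  qed
qed

end
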